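(* Let $f$ be a function with $f\notin\mathscr{P}$ but $f^2\in\mathscr{P}$. Then by pinning some variables of $f$ to constants one obtains a function $h$ of rank 2 and essential arity 2 whose compressed function $\underline{h}$ is a binary function with $\underline{h}\notin\mathscr{P}$ and $\underline{h}^2\in\mathscr{P}$. Furthermore, all four values of $\underline{h}$ are nonzero.
   Context: Functions are maps $\{0,1\}^n\to\mathbb{C}$; $f^2$ is the pointwise square. $\mathscr{P}$: products of unary functions, binary equalities $[1,0,1]$ and binary disequalities $[0,1,0]$. Pinning a variable means fixing it to $0$ or $1$. If $h$ has affine support (an affine subspace of $\mathbb{Z}_2^n$) of dimension $r$ (the rank of $h$) with free variables $x_{j_1},\dots,x_{j_r}$, then every variable $x_k$ equals on $\mathrm{supp}(h)$ an affine function $\sum_t d_tx_{j_t}+e$ of the free variables; variables whose linear parts $\sum_t d_tx_{j_t}$ coincide (and are nonzero) form a bundle, and the essential arity is the number of nonempty bundles. The compressed function $\underline{h}(x_{j_1},\dots,x_{j_r})$ is the value of $h$ at the unique point of $\mathrm{supp}(h)$ with these free-variable values. *)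

theory Defs
  imports Complex_Main
begin

text \<open>A function of arity n is a map bool list => complex, considered only on
  lists of length n (entry i of the list is the value of variable x_i).\<close>

datatype factor = Unary nat "bool \<Rightarrow> complex" | EqF nat nat | NeqF nat nat

fun factor_val :: "factor \<Rightarrow> bool list \<Rightarrow> complex" where
  "factor_val (Unary i u) xs = u (xs ! i)"
| "factor_val (EqF i j) xs = (if xs ! i = xs ! j then 1 else 0)"
| "factor_val (NeqF i j) xs = (if xs ! i \<noteq> xs ! j then 1 else 0)"

fun factor_ok :: "nat \<Rightarrow> factor \<Rightarrow> bool" where
  "factor_ok n (Unary i u) = (i < n)"
| "factor_ok n (EqF i j) = (i < n \<and> j < n)"
| "factor_ok n (NeqF i j) = (i < n \<and> j < n)"

text \<open>The class P: products of unary functions, binary equalities and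
  disequalities (a constant factor is allowed, which only matters for arity 0).\<close>
definition in_P :: "nat \<Rightarrow> (bool list \<Rightarrow> complex) \<Rightarrow> bool" where
  "in_P n f \<longleftrightarrow> (\<exists>c fs. (\<forall>F\<in>set fs. factor_ok n F) \<and>
      (\<forall>xs. length xs = n \<longrightarrow> f xs = c * prod_list (map (\<lambda>F. factor_val F xs) fs)))"

definition fsq :: "(bool list \<Rightarrow> complex) \<Rightarrow> bool list \<Rightarrow> complex" where
  "fsq f = (\<lambda>xs. (f xs)^2)"

text \<open>Pinning: a list p of length n; Some b pins the variable to b, None keeps
  it free. The remaining variables, in their original order, form the arguments
  of the pinned function.\<close>
fun fill :: "bool option list \<Rightarrow> bool list \<Rightarrow> bool list" where
  "fill [] ys = []"
| "fill (Some b # ps) ys = b # fill ps ys"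
| "fill (None # ps) (y # ys) = y # fill ps ys"
| "fill (None # ps) [] = False # fill ps []"

definition pin :: "(bool list \<Rightarrow> complex) \<Rightarrow> bool option list \<Rightarrow> bool list \<Rightarrow> complex" where
  "pin f p = (\<lambda>ys. f (fill p ys))"

definition pin_arity :: "bool option list \<Rightarrow> nat" where
  "pin_arity p = length (filter (\<lambda>q. q = None) p)"

definition supp :: "nat \<Rightarrow> (bool list \<Rightarrow> complex) \<Rightarrow> bool list set" where
  "supp m h = {xs. length xs = m \<and> h xs \<noteq> 0}"

definition xor3 :: "bool list \<Rightarrow> bool list \<Rightarrow> bool list \<Rightarrow> bool list" where
  "xor3 x y z = map (\<lambda>(a, b, c). a \<noteq> (b \<noteq> c)) (zip x (zip y z))"

definition affine_support :: "nat \<Rightarrow> (bool list \<Rightarrow> complex) \<Rightarrow> bool" where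
  "affine_support m h \<longleftrightarrow> supp m h \<noteq> {} \<and>
     (\<forall>x\<in>supp m h. \<forall>y\<in>supp m h. \<forall>z\<in>supp m h. xor3 x y z \<in> supp m h)"

text \<open>Rank = dimension r of the affine support (which has 2^r points).\<close>
definition has_rank :: "nat \<Rightarrow> (bool list \<Rightarrow> complex) \<Rightarrow> nat \<Rightarrow> bool" where
  "has_rank m h r \<longleftrightarrow> affine_support m h \<and> card (supp m h) = 2 ^ r"

definition free_vars :: "nat \<Rightarrow> (bool list \<Rightarrow> complex) \<Rightarrow> nat list \<Rightarrow> bool" where
  "free_vars m h J \<longleftrightarrow> distinct J \<and> (\<forall>j\<in>set J. j < m) \<and>
     bij_betw (\<lambda>xs. map (\<lambda>j. xs ! j) J) (supp m h) {v. length v = length J}"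

definition supp_pt :: "nat \<Rightarrow> (bool list \<Rightarrow> complex) \<Rightarrow> nat list \<Rightarrow> bool list \<Rightarrow> bool list" where
  "supp_pt m h J v = (THE xs. xs \<in> supp m h \<and> map (\<lambda>j. xs ! j) J = v)"

text \<open>Linear part (coefficient vector d) of variable x_k as an affine function
  of the free variables: d_t = x_k(e_t) + x_k(0).\<close>
definition lin_part :: "nat \<Rightarrow> (bool list \<Rightarrow> complex) \<Rightarrow> nat list \<Rightarrow> nat \<Rightarrow> bool list" where
  "lin_part m h J k = map (\<lambda>t. supp_pt m h J (map (\<lambda>s. s = t) [0..<length J]) ! k
       \<noteq> supp_pt m h J (replicate (length J) False) ! k) [0..<length J]"

text \<open>Essential arity: number of nonempty bundles, i.e. of distinct nonzero
  linear parts occurring among the variables.\<close>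
definition ess_arity :: "nat \<Rightarrow> (bool list \<Rightarrow> complex) \<Rightarrow> nat list \<Rightarrow> nat" where
  "ess_arity m h J = card {lin_part m h J k | k. k < m \<and> True \<in> set (lin_part m h J k)}"

definition compressed :: "nat \<Rightarrow> (bool list \<Rightarrow> complex) \<Rightarrow> nat list \<Rightarrow> bool list \<Rightarrow> complex" where
  "compressed m h J = (\<lambda>v. h (supp_pt m h J v))"

end

theory Submission
  imports Defs
begin


definition ptv :: "nat \<Rightarrow> bool list \<Rightarrow> (nat \<Rightarrow> bool) \<Rightarrow> bool \<Rightarrow> bool \<Rightarrow> bool list" where
  "ptv m Y0 \<alpha> s t = map (\<lambda>k. Y0!k \<noteq> (if \<alpha> k then s else t)) [0..<m]"

lemma ptv_len[simp]: "length (ptv m Y0 \<alpha> s t) = m" by (simp add: ptv_def)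
lemma ptv_nth[simp]: "k < m \<Longrightarrow> ptv m Y0 \<alpha> s t ! k = (Y0!k \<noteq> (if \<alpha> k then s else t))"
  by (simp add: ptv_def)

lemma ptv_inj:
  assumes "j1 < m" "j2 < m" "\<alpha> j1" "\<not> \<alpha> j2"
  shows "ptv m Y0 \<alpha> s t = ptv m Y0 \<alpha> s' t' \<longleftrightarrow> s = s' \<and> t = t'"
proof
  assume "ptv m Y0 \<alpha> s t = ptv m Y0 \<alpha> s' t'"
  hence "ptv m Y0 \<alpha> s t ! j1 = ptv m Y0 \<alpha> s' t' ! j1" "ptv m Y0 \<alpha> s t ! j2 = ptv m Y0 \<alpha> s' t' ! j2" by auto
  thus "s = s' \<and> t = t'" using assms by auto
qed auto

lemma l2: "length (xs::'a list) = 2 \<Longrightarrow> \<exists>x y. xs = [x,y]"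
  by (cases xs; cases "tl xs"; cases "tl (tl xs)") auto
lemma cross_P2:
  assumes "G [False,False] \<noteq> 0" "G [False,False] * G [True,True] = G [False,True] * G [True,False]"
  shows "in_P 2 G"
proof -
  let ?c = "G [False,False]"
  let ?u = "\<lambda>b. G [b,False] / ?c" and ?v = "\<lambda>b. G [False,b] / ?c"
  have tt: "G [True,True] = G [False,True] * G [True,False] / ?c"
      using assms by (simp add: eq_divide_eq mult.commute)
  have "\<forall>xs. length xs = 2 \<longrightarrow> G xs = ?c * prod_list (map (\<lambda>F. factor_val F xs) [Unary 0 ?u, Unary 1 ?v])"
  proof (intro allI impI)
    fix xs :: "bool list" assume "length xs = 2"
    then obtain x y where xs: "xs = [x,y]" using l2 by blast
    show "G xs = ?c * prod_list (map (\<lambda>F. factor_val F xs) [Unary 0 ?u, Unary 1 ?v])"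
      using assms(1) unfolding xs by (cases x; cases y) (simp_all add: tt)
  qed
  moreover have "\<forall>F\<in>set [Unary 0 ?u, Unary 1 ?v]. factor_ok 2 F" by simp
  ultimately show ?thesis unfolding in_P_def by blast
qed

lemma factor_cross2:
  assumes "factor_ok 2 F"
    "factor_val F [False,False] \<noteq> 0" "factor_val F [True,True] \<noteq> 0"
    "factor_val F [False,True] \<noteq> 0" "factor_val F [True,False] \<noteq> 0"
  shows "factor_val F [False,False] * factor_val F [True,True] = factor_val F [False,True] * factor_val F [True,False]"
proof (cases F)
  case (Unary i u)
  then have "i = 0 \<or> i = 1" using assms(1) by auto
  then show ?thesis using Unary by (elim disjE) simp_all
next
  case (EqF i j)
  then have ij: "i < 2" "j < 2" using assms(1) by auto
  show ?thesis
  proof (cases "i = j")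
    case True then show ?thesis using EqF by simp
  next
    case False
    then have "(i = 0 \<and> j = 1) \<or> (i = 1 \<and> j = 0)" using ij by linarith
    then show ?thesis using EqF assms(4) by (elim disjE) simp_all
  qed
next
  case (NeqF i j)
  then have ij: "i < 2" "j < 2" using assms(1) by auto
  show ?thesis
  proof (cases "i = j")
    case True then show ?thesis using NeqF assms(2) by simp
  next
    case False
    then have "(i = 0 \<and> j = 1) \<or> (i = 1 \<and> j = 0)" using ij by linarith
    then show ?thesis using NeqF assms(2) by (elim disjE) simp_all
  qed
qed

lemma prod_cross2:
  assumes "\<forall>F\<in>set fs. factor_ok 2 F"
    "prod_list (map (\<lambda>F. factor_val F [False,False]) fs) \<noteq> 0"
    "prod_list (map (\<lambda>F. factor_val F [True,True]) fs) \<noteq> 0"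
    "prod_list (map (\<lambda>F. factor_val F [False,True]) fs) \<noteq> 0"
    "prod_list (map (\<lambda>F. factor_val F [True,False]) fs) \<noteq> 0"
  shows "prod_list (map (\<lambda>F. factor_val F [False,False]) fs) * prod_list (map (\<lambda>F. factor_val F [True,True]) fs)
       = prod_list (map (\<lambda>F. factor_val F [False,True]) fs) * prod_list (map (\<lambda>F. factor_val F [True,False]) fs)"
  using assms
proof (induction fs)
  case Nil then show ?case by simp
next
  case (Cons F fs)
  have e: "factor_val F [False,False] * factor_val F [True,True] = factor_val F [False,True] * factor_val F [True,False]"
    using Cons.prems by (intro factor_cross2) auto
  have i: "prod_list (map (\<lambda>F. factor_val F [False,False]) fs) * prod_list (map (\<lambda>F. factor_val F [True,True]) fs)
       = prod_list (map (\<lambda>F. factor_val F [False,True]) fs) * prod_list (map (\<lambda>F. factor_val F [True,False]) fs)"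
    using Cons by auto
  have ac: "\<And>a b c d :: complex. (a*b)*(c*d) = (a*c)*(b*d)" by (simp add: mult_ac)
  show ?case by (simp only: list.map prod_list.Cons ac e i)
qed

lemma inP2_cross:
  assumes "in_P 2 g" "\<forall>v. length v = 2 \<longrightarrow> g v \<noteq> 0"
  shows "g [False,False] * g [True,True] = g [False,True] * g [True,False]"
proof -
  obtain c fs where ok: "\<forall>F\<in>set fs. factor_ok 2 F" and
    g: "\<forall>xs. length xs = 2 \<longrightarrow> g xs = c * prod_list (map (\<lambda>F. factor_val F xs) fs)"
    using assms(1) unfolding in_P_def by blast
  have nz: "g [a,b] \<noteq> 0" for a b using assms(2) by auto
  have gab: "g [a,b] = c * prod_list (map (\<lambda>F. factor_val F [a,b]) fs)" for a b using g by auto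
  have pnz: "prod_list (map (\<lambda>F. factor_val F [a,b]) fs) \<noteq> 0" for a b using nz[of a b] gab[of a b] by auto
  have "prod_list (map (\<lambda>F. factor_val F [False,False]) fs) * prod_list (map (\<lambda>F. factor_val F [True,True]) fs)
       = prod_list (map (\<lambda>F. factor_val F [False,True]) fs) * prod_list (map (\<lambda>F. factor_val F [True,False]) fs)"
    using prod_cross2[OF ok pnz pnz pnz pnz] .
  then show ?thesis using gab by (simp add: algebra_simps)
qed

lemma core:
  assumes j: "j1 < m" "j2 < m" "\<alpha> j1" "\<not> \<alpha> j2"
    and supp: "\<forall>ys. ys \<in> supp m h \<longleftrightarrow> (\<exists>s t. ys = ptv m Y0 \<alpha> s t)"
    and neq: "h (ptv m Y0 \<alpha> False False) * h (ptv m Y0 \<alpha> True True) \<noteq> h (ptv m Y0 \<alpha> True False) * h (ptv m Y0 \<alpha> False True)"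
    and sq: "(h (ptv m Y0 \<alpha> False False) * h (ptv m Y0 \<alpha> True True))^2 = (h (ptv m Y0 \<alpha> True False) * h (ptv m Y0 \<alpha> False True))^2"
  shows "ess_arity m h [j1,j2] = 2 \<and> \<not> in_P 2 (compressed m h [j1,j2]) \<and> in_P 2 (fsq (compressed m h [j1,j2])) \<and>
    (\<forall>v. length v = 2 \<longrightarrow> compressed m h [j1,j2] v \<noteq> 0)"
proof -
  let ?p = "ptv m Y0 \<alpha>"
  have sp: "supp_pt m h [j1,j2] [v1,v2] = ?p (Y0!j1 \<noteq> v1) (Y0!j2 \<noteq> v2)" for v1 v2
    unfolding supp_pt_def
  proof (rule the_equality)
    show "?p (Y0!j1 \<noteq> v1) (Y0!j2 \<noteq> v2) \<in> supp m h \<and> map (\<lambda>j. ?p (Y0!j1 \<noteq> v1) (Y0!j2 \<noteq> v2) ! j) [j1,j2] = [v1,v2]"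
      using supp j by auto
  next
    fix xs assume a: "xs \<in> supp m h \<and> map (\<lambda>j. xs ! j) [j1, j2] = [v1, v2]"
    then obtain s t where xs: "xs = ?p s t" using supp by blast
    with a j have "(Y0!j1 \<noteq> s) = v1" "(Y0!j2 \<noteq> t) = v2" by auto
    then show "xs = ?p (Y0!j1 \<noteq> v1) (Y0!j2 \<noteq> v2)" using xs by auto
  qed
  have hnz: "h (?p s t) \<noteq> 0" for s t
  proof -
    have "?p s t \<in> supp m h" using supp by blast
    then show ?thesis unfolding supp_def by simp
  qed
  let ?g = "compressed m h [j1,j2]"
  have cv: "?g [v1,v2] = h (?p (Y0!j1 \<noteq> v1) (Y0!j2 \<noteq> v2))" for v1 v2
    unfolding compressed_def sp ..
  have nz: "\<forall>v. length v = 2 \<longrightarrow> ?g v \<noteq> 0"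
  proof (intro allI impI)
    fix v :: "bool list" assume "length v = 2"
    then obtain x y where "v = [x,y]" using l2 by blast
    then show "?g v \<noteq> 0" using cv hnz by simp
  qed
  have ac: "\<And>a b :: complex. a * b = b * a" by (simp add: mult.commute)
  have notP: "\<not> in_P 2 ?g"
  proof
    assume "in_P 2 ?g"
    from inP2_cross[OF this nz] have "?g [False,False] * ?g [True,True] = ?g [False,True] * ?g [True,False]" .
    then show False using neq unfolding cv
      by (cases "Y0!j1"; cases "Y0!j2") (simp_all add: ac)
  qed
  have fP: "in_P 2 (fsq ?g)"
  proof (rule cross_P2)
    show "fsq ?g [False,False] \<noteq> 0" using nz unfolding fsq_def by simp
    show "fsq ?g [False, False] * fsq ?g [True, True] = fsq ?g [False, True] * fsq ?g [True, False]"
      using sq unfolding fsq_def cv power_mult_distrib[symmetric]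
      by (cases "Y0!j1"; cases "Y0!j2") (simp_all add: ac)
  qed
  have lp: "lin_part m h [j1,j2] k = [\<alpha> k, \<not> \<alpha> k]" if "k < m" for k
  proof -
    have u: "[0..<length [j1,j2]] = [0,1]" by (simp add: upt_rec)
    show ?thesis unfolding lin_part_def u using that
      by (simp add: sp numeral_2_eq_2)
  qed
  have "{lin_part m h [j1,j2] k | k. k < m \<and> True \<in> set (lin_part m h [j1,j2] k)} = {[True,False],[False,True]}"
  proof (intro equalityI subsetI)
    fix x assume "x \<in> {lin_part m h [j1,j2] k | k. k < m \<and> True \<in> set (lin_part m h [j1,j2] k)}"
    then obtain k where "k < m" "x = lin_part m h [j1,j2] k" by blast
    then show "x \<in> {[True,False],[False,True]}" using lp by (cases "\<alpha> k") auto
  next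
    fix x assume "x \<in> {[True,False],[False,True]}"
    then show "x \<in> {lin_part m h [j1,j2] k | k. k < m \<and> True \<in> set (lin_part m h [j1,j2] k)}"
    proof
      assume "x = [True,False]" then show ?thesis using lp[of j1] j by force
    next
      assume "x \<in> {[False,True]}" then show ?thesis using lp[of j2] j by force
    qed
  qed
  then have "ess_arity m h [j1,j2] = 2" unfolding ess_arity_def by simp
  then show ?thesis using notP fP nz by blast
qed

lemma ptv_swap: "ptv m Y0 (\<lambda>k. \<not> \<alpha> k) s t = ptv m Y0 \<alpha> t s"
  by (simp add: ptv_def)

lemma card_len: "card {v :: bool list. length v = L} = 2 ^ L"
proof -
  have "card {xs :: bool list. set xs \<subseteq> UNIV \<and> length xs = L} = card (UNIV :: bool set) ^ L"
    by (rule card_lists_length_eq) simp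
  then show ?thesis by simp
qed

lemma abstract2:
  assumes j: "kA < m" "kB < m" "\<alpha> kA" "\<not> \<alpha> kB"
    and supp: "\<forall>ys. ys \<in> supp m h \<longleftrightarrow> (\<exists>s t. ys = ptv m Y0 \<alpha> s t)"
    and neq: "h (ptv m Y0 \<alpha> False False) * h (ptv m Y0 \<alpha> True True) \<noteq> h (ptv m Y0 \<alpha> True False) * h (ptv m Y0 \<alpha> False True)"
    and sq: "(h (ptv m Y0 \<alpha> False False) * h (ptv m Y0 \<alpha> True True))^2 = (h (ptv m Y0 \<alpha> True False) * h (ptv m Y0 \<alpha> False True))^2"
  shows "has_rank m h 2 \<and> (\<exists>J. free_vars m h J) \<and>
       (\<forall>J. free_vars m h J \<longrightarrow>
          ess_arity m h J = 2 \<and>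
          \<not> in_P 2 (compressed m h J) \<and> in_P 2 (fsq (compressed m h J)) \<and>
          (\<forall>v. length v = 2 \<longrightarrow> compressed m h J v \<noteq> 0))"
proof -
  let ?p = "ptv m Y0 \<alpha>"
  have S: "supp m h = (\<lambda>(s,t). ?p s t) ` UNIV"
  proof (intro equalityI subsetI)
    fix x assume "x \<in> supp m h"
    then obtain s t where "x = ?p s t" using supp by blast
    then show "x \<in> (\<lambda>(s,t). ?p s t) ` UNIV" by (auto intro: image_eqI[of _ _ "(s,t)"])
  qed (use supp in auto)
  have inj: "inj (\<lambda>(s,t). ?p s t)" unfolding inj_def using ptv_inj[OF j] by auto
  have c4: "card (supp m h) = 4" unfolding S card_image[OF inj]
    by (simp add: UNIV_Times_UNIV[symmetric] card_cartesian_product del: UNIV_Times_UNIV)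
  have x3: "xor3 (?p s1 t1) (?p s2 t2) (?p s3 t3) = ?p (s1 \<noteq> (s2 \<noteq> s3)) (t1 \<noteq> (t2 \<noteq> t3))" for s1 t1 s2 t2 s3 t3
    by (rule nth_equalityI) (auto simp: xor3_def)
  have aff: "affine_support m h" unfolding affine_support_def
  proof (intro conjI ballI)
    show "supp m h \<noteq> {}" using S by auto
    fix x y z assume "x \<in> supp m h" "y \<in> supp m h" "z \<in> supp m h"
    then obtain s1 t1 s2 t2 s3 t3 where "x = ?p s1 t1" "y = ?p s2 t2" "z = ?p s3 t3" using supp by metis
    then show "xor3 x y z \<in> supp m h" using x3 supp by auto
  qed
  have rank: "has_rank m h 2" unfolding has_rank_def using aff c4 by simp
  have ne: "kA \<noteq> kB" using j by auto
  have fv: "free_vars m h [kA,kB]" unfolding free_vars_def bij_betw_def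
  proof (intro conjI)
    show "distinct [kA,kB]" using ne by simp
    show "\<forall>j\<in>set [kA, kB]. j < m" using j by simp
    show "inj_on (\<lambda>xs. map ((!) xs) [kA, kB]) (supp m h)"
    proof (rule inj_onI)
      fix x y assume "x \<in> supp m h" "y \<in> supp m h" "map ((!) x) [kA, kB] = map ((!) y) [kA, kB]"
      moreover obtain s t s' t' where "x = ?p s t" "y = ?p s' t'" using supp calculation(1,2) by metis
      ultimately show "x = y" using j by auto
    qed
    show "(\<lambda>xs. map ((!) xs) [kA, kB]) ` supp m h = {v. length v = length [kA, kB]}"
    proof (intro equalityI subsetI)
      fix v assume "v \<in> (\<lambda>xs. map ((!) xs) [kA, kB]) ` supp m h"
      then show "v \<in> {v. length v = length [kA, kB]}" by auto
    next
      fix v :: "bool list" assume "v \<in> {v. length v = length [kA, kB]}"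
      then have "length v = 2" by simp
      then obtain v1 v2 where v: "v = [v1,v2]" using l2[of v] by blast
      have "?p (Y0!kA \<noteq> v1) (Y0!kB \<noteq> v2) \<in> supp m h" using supp by blast
      moreover have "map ((!) (?p (Y0!kA \<noteq> v1) (Y0!kB \<noteq> v2))) [kA, kB] = v" using j v by auto
      ultimately show "v \<in> (\<lambda>xs. map ((!) xs) [kA, kB]) ` supp m h" by force
    qed
  qed
  have all: "ess_arity m h J = 2 \<and> \<not> in_P 2 (compressed m h J) \<and> in_P 2 (fsq (compressed m h J)) \<and>
          (\<forall>v. length v = 2 \<longrightarrow> compressed m h J v \<noteq> 0)" if fJ: "free_vars m h J" for J
  proof -
    have b: "bij_betw (\<lambda>xs. map (\<lambda>j. xs ! j) J) (supp m h) {v. length v = length J}"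
      and d: "distinct J" and lt: "\<forall>j\<in>set J. j < m" using fJ unfolding free_vars_def by auto
    have "card {v :: bool list. length v = length J} = 4" using bij_betw_same_card[OF b] c4 by simp
    then have "(2::nat) ^ length J = 2 ^ 2" using card_len by simp
    then have "length J = 2" using power_inject_exp[of "2::nat" "length J" 2] by presburger
    then obtain j1 j2 where J: "J = [j1,j2]" using l2[of J] by blast
    have j12: "j1 < m" "j2 < m" "j1 \<noteq> j2" using lt d J by auto
    have injp: "inj_on (\<lambda>xs. map (\<lambda>j. xs ! j) J) (supp m h)" using b bij_betw_def by blast
    have inS: "?p s t \<in> supp m h" for s t using supp by blast
    have "\<alpha> j1 \<noteq> \<alpha> j2"
    proof
      assume eq: "\<alpha> j1 = \<alpha> j2"
      show False
      proof (cases "\<alpha> j1")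
        case True
        have "map (\<lambda>j. ?p False False ! j) J = map (\<lambda>j. ?p False True ! j) J" using J j12 eq True by simp
        then have "?p False False = ?p False True" using injp inS by (meson inj_onD)
        then show False using ptv_inj[OF j] by blast
      next
        case False
        have "map (\<lambda>j. ?p False False ! j) J = map (\<lambda>j. ?p True False ! j) J" using J j12 eq False by simp
        then have "?p False False = ?p True False" using injp inS by (meson inj_onD)
        then show False using ptv_inj[OF j] by blast
      qed
    qed
    then show ?thesis
    proof (cases "\<alpha> j1")
      case True
      then show ?thesis unfolding J using core[OF j12(1,2) True _ supp neq sq] \<open>\<alpha> j1 \<noteq> \<alpha> j2\<close> by simp
    next
      case False
      have supp': "\<forall>ys. ys \<in> supp m h \<longleftrightarrow> (\<exists>s t. ys = ptv m Y0 (\<lambda>k. \<not> \<alpha> k) s t)"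
        unfolding ptv_swap using supp by blast
      have neq': "h (ptv m Y0 (\<lambda>k. \<not> \<alpha> k) False False) * h (ptv m Y0 (\<lambda>k. \<not> \<alpha> k) True True) \<noteq> h (ptv m Y0 (\<lambda>k. \<not> \<alpha> k) True False) * h (ptv m Y0 (\<lambda>k. \<not> \<alpha> k) False True)"
        unfolding ptv_swap using neq by (simp add: mult.commute)
      have sq': "(h (ptv m Y0 (\<lambda>k. \<not> \<alpha> k) False False) * h (ptv m Y0 (\<lambda>k. \<not> \<alpha> k) True True))^2 = (h (ptv m Y0 (\<lambda>k. \<not> \<alpha> k) True False) * h (ptv m Y0 (\<lambda>k. \<not> \<alpha> k) False True))^2"
        unfolding ptv_swap using sq by (simp add: mult.commute)
      have "\<not> \<alpha> j1" "\<not> \<not> \<alpha> j2" using False \<open>\<alpha> j1 \<noteq> \<alpha> j2\<close> by auto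
      then show ?thesis unfolding J using core[OF j12(1,2) _ _ supp' neq' sq'] by simp
    qed
  qed
  show ?thesis using rank fv all by blast
qed



fun unfill :: "bool option list \<Rightarrow> bool list \<Rightarrow> bool list" where
  "unfill (q # ps) (x # xs) = (if q = None then x # unfill ps xs else unfill ps xs)"
| "unfill _ _ = []"

lemma pin_arity_Cons: "pin_arity (q # ps) = (if q = None then Suc (pin_arity ps) else pin_arity ps)"
  by (simp add: pin_arity_def)
lemma pin_arity_Nil: "pin_arity [] = 0" by (simp add: pin_arity_def)

lemma U1: "length x = length p \<Longrightarrow> length (unfill p x) = pin_arity p"
  by (induction p arbitrary: x) (auto simp: pin_arity_Cons pin_arity_Nil length_Suc_conv)

lemma U2: "length (fill p ys) = length p"
  by (induction p ys rule: fill.induct) auto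

lemma U3: "length ys = pin_arity p \<Longrightarrow> unfill p (fill p ys) = ys"
proof (induction p arbitrary: ys)
  case Nil then show ?case by (simp add: pin_arity_Nil)
next
  case (Cons q ps)
  show ?case
  proof (cases q)
    case None
    then obtain y ys' where "ys = y # ys'" using Cons.prems by (cases ys) (auto simp: pin_arity_Cons)
    then show ?thesis using Cons None by (auto simp: pin_arity_Cons)
  next
    case (Some b)
    then show ?thesis using Cons by (auto simp: pin_arity_Cons)
  qed
qed

lemma U4: "length x = length p \<Longrightarrow> (\<forall>i<length p. \<forall>b. p!i = Some b \<longrightarrow> x!i = b) \<Longrightarrow> fill p (unfill p x) = x"
proof (induction p arbitrary: x)
  case Nil then show ?case by simp
next
  case (Cons q ps)
  then obtain y xs where x: "x = y # xs" by (cases x) auto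
  have h: "\<forall>i<length ps. \<forall>b. ps!i = Some b \<longrightarrow> xs!i = b" using Cons.prems x by fastforce
  have IH: "fill ps (unfill ps xs) = xs" using Cons.IH[OF _ h] Cons.prems x by simp
  show ?case
  proof (cases q)
    case None then show ?thesis using x IH by simp
  next
    case (Some b)
    then have "y = b" using Cons.prems(2) x by force
    then show ?thesis using x IH Some by simp
  qed
qed

lemma U5: "\<forall>t<pin_arity p. \<exists>i<length p. p!i = None \<and> (\<forall>x. length x = length p \<longrightarrow> unfill p x ! t = x ! i)"
proof (induction p)
  case Nil then show ?case by (simp add: pin_arity_Nil)
next
  case (Cons q ps)
  show ?case
  proof (intro allI impI)
    fix t assume t: "t < pin_arity (q # ps)"
    show "\<exists>i<length (q # ps). (q # ps) ! i = None \<and> (\<forall>x. length x = length (q # ps) \<longrightarrow> unfill (q # ps) x ! t = x ! i)"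
    proof (cases q)
      case None
      show ?thesis
      proof (cases t)
        case 0
        show ?thesis using None 0
          by (intro exI[of _ 0]) (auto simp: length_Suc_conv)
      next
        case (Suc t')
        then have "t' < pin_arity ps" using t None by (simp add: pin_arity_Cons)
        then obtain i where i: "i < length ps" "ps ! i = None" "\<forall>x. length x = length ps \<longrightarrow> unfill ps x ! t' = x ! i"
          using Cons.IH by blast
        show ?thesis using None Suc i
          by (intro exI[of _ "Suc i"]) (auto simp: length_Suc_conv)
      qed
    next
      case (Some b)
      then have "t < pin_arity ps" using t by (simp add: pin_arity_Cons)
      then obtain i where i: "i < length ps" "ps ! i = None" "\<forall>x. length x = length ps \<longrightarrow> unfill ps x ! t = x ! i"
        using Cons.IH by blast
      show ?thesis using Some i
        by (intro exI[of _ "Suc i"]) (auto simp: length_Suc_conv)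
    qed
  qed
qed

lemma U6: "\<forall>i<length p. \<forall>b. p!i = Some b \<longrightarrow> fill p ys ! i = b"
proof (induction p ys rule: fill.induct)
  case (2 b ps ys) then show ?case by (auto simp: nth_Cons split: nat.splits)
next
  case (3 ps y ys) then show ?case by (auto simp: nth_Cons split: nat.splits)
next
  case (4 ps) then show ?case by (auto simp: nth_Cons split: nat.splits)
qed simp

lemma U7: "\<forall>i<length p. p!i = None \<longrightarrow> (\<exists>t<pin_arity p. \<forall>x. length x = length p \<longrightarrow> unfill p x ! t = x ! i)"
proof (induction p)
  case Nil then show ?case by simp
next
  case (Cons q ps)
  show ?case
  proof (intro allI impI)
    fix i assume i: "i < length (q # ps)" "(q # ps) ! i = None"
    show "\<exists>t<pin_arity (q # ps). \<forall>x. length x = length (q # ps) \<longrightarrow> unfill (q # ps) x ! t = x ! i"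
    proof (cases i)
      case 0
      then have "q = None" using i by simp
      then show ?thesis using 0 by (intro exI[of _ 0]) (auto simp: pin_arity_Cons length_Suc_conv)
    next
      case (Suc i')
      then have "i' < length ps" "ps ! i' = None" using i by auto
      then obtain t where t: "t < pin_arity ps" "\<forall>x. length x = length ps \<longrightarrow> unfill ps x ! t = x ! i'"
        using Cons.IH by blast
      show ?thesis
      proof (cases q)
        case None
        then show ?thesis using t Suc by (intro exI[of _ "Suc t"]) (auto simp: pin_arity_Cons length_Suc_conv)
      next
        case (Some b)
        then show ?thesis using t Suc by (intro exI[of _ t]) (auto simp: pin_arity_Cons length_Suc_conv)
      qed
    qed
  qed
qed



definition flip :: "nat set \<Rightarrow> bool list \<Rightarrow> bool list" where
  "flip S x = map (\<lambda>k. x!k \<noteq> (k \<in> S)) [0..<length x]"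

lemma flip_len[simp]: "length (flip S x) = length x" by (simp add: flip_def)
lemma flip_nth[simp]: "k < length x \<Longrightarrow> flip S x ! k = (x!k \<noteq> (k \<in> S))" by (simp add: flip_def)
lemma flip_empty[simp]: "flip {} x = x" by (rule nth_equalityI) auto
lemma flip_flip: "A \<inter> B = {} \<Longrightarrow> flip A (flip B x) = flip (A \<union> B) x"
  by (rule nth_equalityI) auto

fun ind :: "factor \<Rightarrow> factor" where
  "ind (Unary i u) = Unary i (\<lambda>b. if u b = 0 then 0 else 1)"
| "ind (EqF i j) = EqF i j"
| "ind (NeqF i j) = NeqF i j"

lemma ind_val: "factor_val (ind F) x = (if factor_val F x = 0 then 0 else 1)"
  by (cases F) auto
lemma ind_ok: "factor_ok n (ind F) = factor_ok n F"
  by (cases F) auto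
lemma ind_prod: "prod_list (map (\<lambda>F. factor_val F x) (map ind fs)) = (if \<forall>F\<in>set fs. factor_val F x \<noteq> 0 then 1 else 0)"
  by (induction fs) (auto simp: ind_val)

lemma prod4: "(\<forall>x\<in>set xs. A x * B x = C x * E x) \<Longrightarrow>
   prod_list (map A xs) * prod_list (map B xs) = prod_list (map C xs) * prod_list (map (E::_\<Rightarrow>complex) xs)"
proof (induction xs)
  case Nil then show ?case by simp
next
  case (Cons a xs)
  have ac: "\<And>a b c d :: complex. (a*b)*(c*d) = (a*c)*(b*d)" by (simp add: mult_ac)
  have i: "prod_list (map A xs) * prod_list (map B xs) = prod_list (map C xs) * prod_list (map E xs)"
    using Cons by simp
  have e: "A a * B a = C a * E a" using Cons.prems by simp
  show ?case by (simp only: list.map prod_list.Cons ac e i)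
qed

locale sqP =
  fixes n :: nat and f :: "bool list \<Rightarrow> complex" and c :: complex and fs :: "factor list"
  assumes ok: "\<forall>F\<in>set fs. factor_ok n F"
    and sqf: "\<forall>xs. length xs = n \<longrightarrow> (f xs)^2 = c * prod_list (map (\<lambda>F. factor_val F xs) fs)"
    and cnz: "c \<noteq> 0"
begin

definition D where "D = {xs. length xs = n \<and> f xs \<noteq> 0}"

definition closed :: "nat set \<Rightarrow> bool" where
  "closed S \<longleftrightarrow> (\<forall>F\<in>set fs. case F of EqF i j \<Rightarrow> (i \<in> S \<longleftrightarrow> j \<in> S) | NeqF i j \<Rightarrow> (i \<in> S \<longleftrightarrow> j \<in> S) | Unary _ _ \<Rightarrow> True)"

definition E :: "(nat \<times> nat) set" where
  "E = {(i,j). EqF i j \<in> set fs \<or> EqF j i \<in> set fs \<or> NeqF i j \<in> set fs \<or> NeqF j i \<in> set fs}"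

definition comp :: "nat \<Rightarrow> nat set" where
  "comp i = {j. (i,j) \<in> E\<^sup>*}"

lemma D_iff: "xs \<in> D \<longleftrightarrow> length xs = n \<and> (\<forall>F\<in>set fs. factor_val F xs \<noteq> 0)"
proof -
  have "length xs = n \<Longrightarrow> f xs \<noteq> 0 \<longleftrightarrow> (\<forall>F\<in>set fs. factor_val F xs \<noteq> 0)"
  proof -
    assume l: "length xs = n"
    have "f xs \<noteq> 0 \<longleftrightarrow> (f xs)^2 \<noteq> 0" by simp
    also have "\<dots> \<longleftrightarrow> prod_list (map (\<lambda>F. factor_val F xs) fs) \<noteq> 0" using sqf l cnz by simp
    also have "\<dots> \<longleftrightarrow> (\<forall>F\<in>set fs. factor_val F xs \<noteq> 0)" by (auto simp: prod_list_zero_iff)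
    finally show ?thesis .
  qed
  then show ?thesis unfolding D_def by auto
qed

lemma E_sym: "sym E" unfolding E_def sym_def by auto

lemma comp_self: "i \<in> comp i" unfolding comp_def by simp

lemma comp_sym: "j \<in> comp i \<Longrightarrow> i \<in> comp j"
  using sym_rtrancl[OF E_sym] unfolding comp_def sym_def by blast

lemma comp_eq: "j \<in> comp i \<Longrightarrow> comp j = comp i"
proof -
  assume j: "j \<in> comp i"
  then have ij: "(i,j) \<in> E\<^sup>*" "(j,i) \<in> E\<^sup>*" using comp_sym unfolding comp_def by auto
  show ?thesis
  proof (intro equalityI subsetI)
    fix x assume "x \<in> comp j"
    then have "(j,x) \<in> E\<^sup>*" unfolding comp_def by simp
    then have "(i,x) \<in> E\<^sup>*" by (rule rtrancl_trans[OF ij(1)])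
    then show "x \<in> comp i" unfolding comp_def by simp
  next
    fix x assume "x \<in> comp i"
    then have "(i,x) \<in> E\<^sup>*" unfolding comp_def by simp
    then have "(j,x) \<in> E\<^sup>*" by (rule rtrancl_trans[OF ij(2)])
    then show "x \<in> comp j" unfolding comp_def by simp
  qed
qed

lemma comp_disj: "j \<notin> comp i \<Longrightarrow> comp i \<inter> comp j = {}"
proof (rule ccontr)
  assume j: "j \<notin> comp i" and "comp i \<inter> comp j \<noteq> {}"
  then obtain k where "k \<in> comp i" "k \<in> comp j" by blast
  then have "comp k = comp i" "comp k = comp j" using comp_eq[of k i] comp_eq[of k j] by simp_all
  then show False using j comp_self[of j] by simp
qed

lemma comp_step: "x \<in> comp i \<Longrightarrow> (x,y) \<in> E \<Longrightarrow> y \<in> comp i"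
  unfolding comp_def by (simp add: rtrancl_into_rtrancl)

lemma closed_comp: "closed (comp i)"
  unfolding closed_def
proof
  fix F assume F: "F \<in> set fs"
  show "case F of EqF i' j \<Rightarrow> (i' \<in> comp i \<longleftrightarrow> j \<in> comp i) | NeqF i' j \<Rightarrow> (i' \<in> comp i \<longleftrightarrow> j \<in> comp i) | Unary _ _ \<Rightarrow> True"
  proof (cases F)
    case (EqF x y)
    then have "(x,y) \<in> E" "(y,x) \<in> E" using F unfolding E_def by auto
    then have "x \<in> comp i \<longleftrightarrow> y \<in> comp i" using comp_step by blast
    then show ?thesis using EqF by simp
  next
    case (NeqF x y)
    then have "(x,y) \<in> E" "(y,x) \<in> E" using F unfolding E_def by auto
    then have "x \<in> comp i \<longleftrightarrow> y \<in> comp i" using comp_step by blast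
    then show ?thesis using NeqF by simp
  qed simp
qed

lemma closed_sub: "closed S \<Longrightarrow> i \<in> S \<Longrightarrow> comp i \<subseteq> S"
proof
  fix j assume S: "closed S" "i \<in> S" and "j \<in> comp i"
  then have "(i,j) \<in> E\<^sup>*" unfolding comp_def by simp
  then show "j \<in> S"
  proof (induction rule: rtrancl_induct)
    case base then show ?case using S by simp
  next
    case (step y z)
    from step(2) have "EqF y z \<in> set fs \<or> EqF z y \<in> set fs \<or> NeqF y z \<in> set fs \<or> NeqF z y \<in> set fs"
      unfolding E_def by simp
    then show ?case using S(1) step(3) unfolding closed_def by fastforce
  qed
qed

lemma comp_lt: "i < n \<Longrightarrow> comp i \<subseteq> {..<n}"
proof
  fix j assume i: "i < n" and "j \<in> comp i"
  then have "(i,j) \<in> E\<^sup>*" unfolding comp_def by simp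
  then show "j \<in> {..<n}"
  proof (induction rule: rtrancl_induct)
    case base then show ?case using i by simp
  next
    case (step y z)
    from step(2) have "EqF y z \<in> set fs \<or> EqF z y \<in> set fs \<or> NeqF y z \<in> set fs \<or> NeqF z y \<in> set fs"
      unfolding E_def by simp
    then show ?case using ok by fastforce
  qed
qed

lemma closed_Un: "closed A \<Longrightarrow> closed B \<Longrightarrow> closed (A \<union> B)"
  unfolding closed_def by (fastforce split: factor.splits)
lemma closed_Diff: "closed A \<Longrightarrow> closed B \<Longrightarrow> closed (A - B)"
  unfolding closed_def by (fastforce split: factor.splits)
lemma closed_empty: "closed {}"
  unfolding closed_def by (auto split: factor.splits)

lemma home: "F \<in> set fs \<Longrightarrow> \<exists>i<n. \<forall>x y. (\<forall>k\<in>comp i. x!k = y!k) \<longrightarrow> factor_val F x = factor_val F y"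
proof (cases F)
  case (Unary i u)
  assume F: "F \<in> set fs"
  then have "i < n" using ok Unary by fastforce
  then show ?thesis using Unary comp_self by (intro exI[of _ i]) auto
next
  case (EqF i j)
  assume F: "F \<in> set fs"
  then have "i < n" using ok EqF by fastforce
  moreover have "j \<in> comp i" using F EqF unfolding comp_def E_def by auto
  ultimately show ?thesis using EqF comp_self by (intro exI[of _ i]) auto
next
  case (NeqF i j)
  assume F: "F \<in> set fs"
  then have "i < n" using ok NeqF by fastforce
  moreover have "j \<in> comp i" using F NeqF unfolding comp_def E_def by auto
  ultimately show ?thesis using NeqF comp_self by (intro exI[of _ i]) auto
qed

lemma G2:
  assumes z: "z \<in> D" and T: "closed T" and W: "\<forall>i\<in>T. \<exists>S. closed S \<and> i \<in> S \<and> flip S z \<in> D"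
  shows "flip T z \<in> D"
  unfolding D_iff
proof (intro conjI ballI)
  have lz: "length z = n" using z D_def by simp
  then show "length (flip T z) = n" by simp
  fix F assume F: "F \<in> set fs"
  obtain i where i: "i < n" "\<forall>x y. (\<forall>k\<in>comp i. x!k = y!k) \<longrightarrow> factor_val F x = factor_val F y"
    using home[OF F] by blast
  have cl: "comp i \<subseteq> {..<n}" using comp_lt[OF i(1)] .
  show "factor_val F (flip T z) \<noteq> 0"
  proof (cases "i \<in> T")
    case True
    then obtain S where S: "closed S" "i \<in> S" "flip S z \<in> D" using W by blast
    have "comp i \<subseteq> S" "comp i \<subseteq> T" using closed_sub S True T by auto
    then have "\<forall>k\<in>comp i. flip T z ! k = flip S z ! k"
    proof (intro ballI)
      fix k assume k: "k \<in> comp i"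
      then have "k < n" "k \<in> S" "k \<in> T" using cl \<open>comp i \<subseteq> S\<close> \<open>comp i \<subseteq> T\<close> by auto
      then show "flip T z ! k = flip S z ! k" using lz by simp
    qed
    then have "factor_val F (flip T z) = factor_val F (flip S z)" using i(2) by blast
    then show ?thesis using S(3) F D_iff by simp
  next
    case False
    have "\<forall>k\<in>comp i. k \<notin> T"
    proof (intro ballI notI)
      fix k assume "k \<in> comp i" "k \<in> T"
      then have "comp k \<subseteq> T" "i \<in> comp k" using closed_sub T comp_sym by auto
      then show False using False by auto
    qed
    then have "\<forall>k\<in>comp i. flip T z ! k = z ! k"
    proof (intro ballI)
      fix k assume k: "k \<in> comp i"
      then have "k < n" "k \<notin> T" using cl \<open>\<forall>k\<in>comp i. k \<notin> T\<close> by auto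
      then show "flip T z ! k = z ! k" using lz by simp
    qed
    then have "factor_val F (flip T z) = factor_val F z" using i(2) by blast
    then show ?thesis using z F D_iff by simp
  qed
qed

lemma diff_closed:
  assumes x: "x \<in> D" and z: "z \<in> D"
  shows "closed {k. k < n \<and> x!k \<noteq> z!k}" and "x = flip {k. k < n \<and> x!k \<noteq> z!k} z"
proof -
  have lx: "length x = n" and lz: "length z = n" using x z D_def by auto
  show "x = flip {k. k < n \<and> x!k \<noteq> z!k} z"
    by (rule nth_equalityI) (auto simp: lx lz)
  show "closed {k. k < n \<and> x!k \<noteq> z!k}" unfolding closed_def
  proof
    fix F assume F: "F \<in> set fs"
    have fx: "factor_val F x \<noteq> 0" and fz: "factor_val F z \<noteq> 0" using F x z D_iff by auto
    show "case F of EqF i j \<Rightarrow> (i \<in> {k. k < n \<and> x!k \<noteq> z!k} \<longleftrightarrow> j \<in> {k. k < n \<and> x!k \<noteq> z!k})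
       | NeqF i j \<Rightarrow> (i \<in> {k. k < n \<and> x!k \<noteq> z!k} \<longleftrightarrow> j \<in> {k. k < n \<and> x!k \<noteq> z!k}) | Unary _ _ \<Rightarrow> True"
    proof (cases F)
      case (EqF i j)
      have "i < n" "j < n" using ok F EqF by fastforce+
      moreover have "x!i = x!j" using fx EqF by (cases "x!i = x!j") simp_all
      moreover have "z!i = z!j" using fz EqF by (cases "z!i = z!j") simp_all
      ultimately show ?thesis using EqF by simp
    next
      case (NeqF i j)
      have "i < n" "j < n" using ok F NeqF by fastforce+
      moreover have "x!i \<noteq> x!j" using fx NeqF by (cases "x!i = x!j") simp_all
      moreover have "z!i \<noteq> z!j" using fz NeqF by (cases "z!i = z!j") simp_all
      ultimately show ?thesis using NeqF by auto
    qed simp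
  qed
qed

end


context sqP begin

definition OB where
  "OB w a b \<longleftrightarrow> w \<in> D \<and> a < n \<and> b < n \<and> b \<notin> comp a \<and> flip (comp a) w \<in> D \<and> flip (comp b) w \<in> D
     \<and> flip (comp a \<union> comp b) w \<in> D
     \<and> f w * f (flip (comp a \<union> comp b) w) \<noteq> f (flip (comp a) w) * f (flip (comp b) w)"

lemma fin_sub: "S \<subseteq> {..<n} \<Longrightarrow> finite S" using finite_subset by blast

lemma Q:
  assumes noob: "\<forall>w a b. \<not> OB w a b" and z: "z \<in> D"
  shows "closed S \<Longrightarrow> S \<subseteq> {..<n} \<Longrightarrow> flip S z \<in> D \<Longrightarrow> a < n \<Longrightarrow> comp a \<inter> S = {} \<Longrightarrow> flip (comp a) z \<in> D
    \<Longrightarrow> f (flip (S \<union> comp a) z) * f z = f (flip S z) * f (flip (comp a) z)"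
proof (induction "card S" arbitrary: S rule: less_induct)
  case less
  show ?case
  proof (cases "S = {}")
    case True then show ?thesis by (simp add: mult.commute)
  next
    case False
    then obtain b where b: "b \<in> S" by blast
    have bn: "b < n" using b less.prems(2) by auto
    let ?Ca = "comp a" and ?Cb = "comp b"
    have CbS: "?Cb \<subseteq> S" using closed_sub less.prems(1) b by blast
    define S2 where "S2 = S - ?Cb"
    have clS2: "closed S2" unfolding S2_def using closed_Diff less.prems(1) closed_comp by blast
    have finS: "finite S" using fin_sub less.prems(2) .
    have "S2 \<subset> S" unfolding S2_def using b comp_self[of b] by blast
    then have cardS2: "card S2 < card S" using psubset_card_mono[OF finS] by blast
    have S2sub: "S2 \<subseteq> {..<n}" using less.prems(2) S2_def by auto
    have fS2: "flip S2 z \<in> D" by (rule G2[OF z clS2]) (use less.prems(1,3) S2_def in blast)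
    have CaS2: "?Ca \<inter> S2 = {}" using less.prems(5) S2_def by auto
    have IH: "f (flip (S2 \<union> ?Ca) z) * f z = f (flip S2 z) * f (flip ?Ca z)"
      using less.hyps[OF cardS2 clS2 S2sub fS2 less.prems(4) CaS2 less.prems(6)] .
    define w where "w = flip S2 z"
    have bCa: "b \<notin> ?Ca" using b less.prems(5) by auto
    have CaCb: "?Ca \<inter> ?Cb = {}" using comp_disj[OF bCa] .
    have CbS2: "?Cb \<inter> S2 = {}" using S2_def by auto
    have e1: "flip ?Ca w = flip (S2 \<union> ?Ca) z" unfolding w_def using flip_flip[OF CaS2] by (simp add: Un_commute)
    have e2: "flip ?Cb w = flip S z" unfolding w_def using flip_flip[OF CbS2] CbS S2_def by (simp add: Un_commute Un_absorb2 Un_Diff_cancel2)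
    have e3: "flip (?Ca \<union> ?Cb) w = flip (S \<union> ?Ca) z" unfolding w_def
    proof -
      have "(?Ca \<union> ?Cb) \<inter> S2 = {}" using CaS2 CbS2 by auto
      then have "flip (?Ca \<union> ?Cb) (flip S2 z) = flip (?Ca \<union> ?Cb \<union> S2) z" by (rule flip_flip)
      moreover have "?Ca \<union> ?Cb \<union> S2 = S \<union> ?Ca" using CbS S2_def by auto
      ultimately show "flip (?Ca \<union> ?Cb) (flip S2 z) = flip (S \<union> ?Ca) z" by simp
    qed
    have wit: "\<forall>i\<in>T. \<exists>S'. closed S' \<and> i \<in> S' \<and> flip S' z \<in> D" if "T \<subseteq> S \<union> ?Ca" for T
    proof
      fix i assume "i \<in> T"
      then have "i \<in> S \<or> i \<in> ?Ca" using that by auto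
      then show "\<exists>S'. closed S' \<and> i \<in> S' \<and> flip S' z \<in> D"
        using less.prems(1,3,6) closed_comp by blast
    qed
    have d1: "flip (S2 \<union> ?Ca) z \<in> D"
      by (rule G2[OF z closed_Un[OF clS2 closed_comp]]) (rule wit, auto simp: S2_def)
    have d3: "flip (S \<union> ?Ca) z \<in> D"
      by (rule G2[OF z closed_Un[OF less.prems(1) closed_comp]]) (rule wit, auto)
    have wD: "w \<in> D" using fS2 w_def by simp
    have "\<not> OB w a b" using noob by blast
    then have E1: "f w * f (flip (S \<union> ?Ca) z) = f (flip (S2 \<union> ?Ca) z) * f (flip S z)"
      unfolding OB_def using wD less.prems(4) bn bCa e1 e2 e3 d1 d3 less.prems(3) by auto
    have fw: "f w \<noteq> 0" using wD D_def by simp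
    have "f w * (f (flip (S \<union> ?Ca) z) * f z) = (f w * f (flip (S \<union> ?Ca) z)) * f z" by (simp add: mult.assoc)
    also have "\<dots> = f (flip S z) * (f (flip (S2 \<union> ?Ca) z) * f z)" using E1 by (simp add: mult_ac)
    also have "\<dots> = f w * (f (flip S z) * f (flip ?Ca z))" using IH w_def by (simp add: mult_ac)
    finally show ?thesis using fw by simp
  qed
qed


definition R where "R = {i. i < n \<and> (\<forall>j\<in>comp i. i \<le> j)}"

lemma R_fin: "finite R" unfolding R_def by simp

lemma R_uniq: "x \<in> R \<Longrightarrow> k \<in> R \<Longrightarrow> x \<in> comp k \<Longrightarrow> x = k"
proof -
  assume x: "x \<in> R" and k: "k \<in> R" and xk: "x \<in> comp k"
  have "k \<in> comp x" using comp_sym[OF xk] .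
  then have "x \<le> k" using x R_def by auto
  moreover have "k \<le> x" using k xk R_def by auto
  ultimately show "x = k" by simp
qed

lemma PF:
  assumes noob: "\<forall>w a b. \<not> OB w a b" and z: "z \<in> D"
  shows "closed S \<Longrightarrow> S \<subseteq> {..<n} \<Longrightarrow> flip S z \<in> D
    \<Longrightarrow> f (flip S z) = f z * (\<Prod>k\<in>R \<inter> S. f (flip (comp k) z) / f z)"
proof (induction "card S" arbitrary: S rule: less_induct)
  case less
  show ?case
  proof (cases "S = {}")
    case True then show ?thesis by simp
  next
    case False
    then obtain b where b: "b \<in> S" by blast
    have bn: "b < n" using b less.prems(2) by auto
    have cbn: "comp b \<subseteq> {..<n}" using comp_lt[OF bn] .
    have finb: "finite (comp b)" using fin_sub[OF cbn] .
    define k where "k = Min (comp b)"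
    have kin: "k \<in> comp b" unfolding k_def using Min_in[OF finb] comp_self[of b] by blast
    have ck: "comp k = comp b" using comp_eq[OF kin] .
    have kR: "k \<in> R" unfolding R_def using kin cbn ck Min_le[OF finb] k_def by auto
    have CbS: "comp b \<subseteq> S" using closed_sub less.prems(1) b by blast
    have kS: "k \<in> S" using kin CbS by blast
    define S2 where "S2 = S - comp k"
    have clS2: "closed S2" unfolding S2_def using closed_Diff less.prems(1) closed_comp by blast
    have finS: "finite S" using fin_sub less.prems(2) .
    have "S2 \<subset> S" unfolding S2_def using kS comp_self[of k] by blast
    then have cardS2: "card S2 < card S" using psubset_card_mono[OF finS] by blast
    have S2sub: "S2 \<subseteq> {..<n}" using less.prems(2) S2_def by auto
    have fS2: "flip S2 z \<in> D" by (rule G2[OF z clS2]) (use less.prems(1,3) S2_def in blast)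
    have fk: "flip (comp k) z \<in> D" by (rule G2[OF z closed_comp]) (use less.prems(1,3) CbS ck in blast)
    have kn: "k < n" using kR R_def by simp
    have dis: "comp k \<inter> S2 = {}" using S2_def by auto
    have Qe: "f (flip (S2 \<union> comp k) z) * f z = f (flip S2 z) * f (flip (comp k) z)"
      using Q[OF noob z clS2 S2sub fS2 kn dis fk] .
    have SU: "S2 \<union> comp k = S" using S2_def CbS ck by auto
    have IH: "f (flip S2 z) = f z * (\<Prod>k\<in>R \<inter> S2. f (flip (comp k) z) / f z)"
      using less.hyps[OF cardS2 clS2 S2sub fS2] .
    have RS: "R \<inter> S = insert k (R \<inter> S2)" "k \<notin> R \<inter> S2" using kR kS S2_def comp_self[of k] R_uniq[OF _ kR] by auto
    have fz: "f z \<noteq> 0" using z D_def by simp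
    have "f (flip S z) = f (flip S2 z) * f (flip (comp k) z) / f z" using Qe SU fz
      by (simp add: eq_divide_eq)
    also have "\<dots> = f z * ((f (flip (comp k) z) / f z) * (\<Prod>k\<in>R \<inter> S2. f (flip (comp k) z) / f z))"
      using IH by (simp add: field_simps)
    also have "\<dots> = f z * (\<Prod>k\<in>R \<inter> S. f (flip (comp k) z) / f z)"
      unfolding RS(1) using RS(2) R_fin by simp
    finally show ?thesis .
  qed
qed

lemma noob_P:
  assumes noob: "\<forall>w a b. \<not> OB w a b"
  shows "in_P n f"
proof (cases "D = {}")
  case True
  then have "\<forall>xs. length xs = n \<longrightarrow> f xs = 0 * prod_list (map (\<lambda>F. factor_val F xs) [])"
    unfolding D_def by auto
  then show ?thesis unfolding in_P_def by (intro exI[of _ 0] exI[of _ "[]"]) simp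
next
  case False
  then obtain z where z: "z \<in> D" by blast
  have lz: "length z = n" using z D_def by simp
  have fz: "f z \<noteq> 0" using z D_def by simp
  define r where "r k = f (flip (comp k) z) / f z" for k
  define u where "u k b = (if b = z!k then 1 else r k)" for k b
  define fs' where "fs' = map (\<lambda>k. Unary k (u k)) (sorted_list_of_set R) @ map ind fs"
  have okR: "\<forall>F\<in>set fs'. factor_ok n F" unfolding fs'_def using ok R_fin
    by (auto simp: ind_ok R_def)
  have main: "f xs = f z * prod_list (map (\<lambda>F. factor_val F xs) fs')" if l: "length xs = n" for xs
  proof -
    have p1: "prod_list (map (\<lambda>F. factor_val F xs) (map (\<lambda>k. Unary k (u k)) (sorted_list_of_set R)))
        = (\<Prod>k\<in>R. u k (xs!k))"
      using prod.distinct_set_conv_list[of "sorted_list_of_set R" "\<lambda>k. u k (xs!k)"] R_fin by (simp add: o_def)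
    show ?thesis
    proof (cases "xs \<in> D")
      case True
      let ?S = "{k. k < n \<and> xs!k \<noteq> z!k}"
      have cl: "closed ?S" and xe: "xs = flip ?S z" using diff_closed[OF True z] by auto
      have sub: "?S \<subseteq> {..<n}" by auto
      have fxe: "f xs = f (flip ?S z)" using arg_cong[OF xe, of f] .
      have D': "flip ?S z \<in> D" using True arg_cong[OF xe, of "\<lambda>x. x \<in> D"] by simp
      have "f xs = f z * (\<Prod>k\<in>R \<inter> ?S. r k)"
        unfolding fxe r_def by (rule PF[OF noob z cl sub D'])
      also have "(\<Prod>k\<in>R \<inter> ?S. r k) = (\<Prod>k\<in>R. if k \<in> ?S then r k else 1)"
        by (rule prod.inter_restrict[OF R_fin])
      also have "\<dots> = (\<Prod>k\<in>R. u k (xs!k))"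
        by (rule prod.cong) (auto simp: u_def R_def)
      finally have "f xs = f z * (\<Prod>k\<in>R. u k (xs!k))" .
      moreover have "\<forall>F\<in>set fs. factor_val F xs \<noteq> 0" using True D_iff by simp
      ultimately show ?thesis unfolding fs'_def using p1 ind_prod by simp
    next
      case False
      then have f0: "f xs = 0" using l D_def by simp
      have "\<not> (\<forall>F\<in>set fs. factor_val F xs \<noteq> 0)" using False l D_iff by simp
      then have ip: "prod_list (map (\<lambda>F. factor_val F xs) (map ind fs)) = 0" using ind_prod[of xs fs] by simp
      show ?thesis unfolding fs'_def map_append prod_list.append ip f0 by simp
    qed
  qed
  show ?thesis unfolding in_P_def using okR main by blast
qed

end


context sqP begin

lemma OB_pin:
  assumes OB: "OB w a b"
  shows "\<exists>p. length p = n \<and>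
    (let h = pin f p; m = pin_arity p in
       has_rank m h 2 \<and> (\<exists>J. free_vars m h J) \<and>
       (\<forall>J. free_vars m h J \<longrightarrow>
          ess_arity m h J = 2 \<and>
          \<not> in_P 2 (compressed m h J) \<and> in_P 2 (fsq (compressed m h J)) \<and>
          (\<forall>v. length v = 2 \<longrightarrow> compressed m h J v \<noteq> 0)))"
proof -
  let ?Ca = "comp a" and ?Cb = "comp b"
  let ?C = "?Ca \<union> ?Cb"
  have wD: "w \<in> D" and an: "a < n" and bn: "b < n" and bCa: "b \<notin> ?Ca"
    and d1: "flip ?Ca w \<in> D" and d2: "flip ?Cb w \<in> D" and d3: "flip ?C w \<in> D"
    and neq: "f w * f (flip ?C w) \<noteq> f (flip ?Ca w) * f (flip ?Cb w)"
    using OB unfolding OB_def by auto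
  have lw: "length w = n" using wD D_def by simp
  have dis: "?Ca \<inter> ?Cb = {}" using comp_disj[OF bCa] .
  define p where "p = map (\<lambda>i. if i \<in> ?C then None else Some (w!i)) [0..<n]"
  have lp: "length p = n" unfolding p_def by simp
  have pN: "i < n \<Longrightarrow> p!i = None \<longleftrightarrow> i \<in> ?C" for i unfolding p_def by simp
  have pS: "i < n \<Longrightarrow> p!i = Some bb \<longleftrightarrow> i \<notin> ?C \<and> bb = w!i" for i bb unfolding p_def by auto
  define m where "m = pin_arity p"
  define h where "h = pin f p"
  define chi where "chi = map (\<lambda>i. i \<in> ?Ca) [0..<n]"
  define \<alpha> where "\<alpha> t = unfill p chi ! t" for t
  define Y0 where "Y0 = unfill p w"
  define Sst where "Sst s t = (if s then ?Ca else {}) \<union> (if t then ?Cb else {})" for s t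
  have key: "unfill p (flip (Sst s t) w) = ptv m Y0 \<alpha> s t" for s t
  proof (rule nth_equalityI)
    show "length (unfill p (flip (Sst s t) w)) = length (ptv m Y0 \<alpha> s t)"
      using U1[of "flip (Sst s t) w" p] lw lp m_def by simp
    fix k assume "k < length (unfill p (flip (Sst s t) w))"
    then have k: "k < m" using U1[of "flip (Sst s t) w" p] lw lp m_def by simp
    obtain i where i: "i < n" "p!i = None" "\<forall>x. length x = n \<longrightarrow> unfill p x ! k = x ! i"
      using U5[of p] k m_def lp by blast
    have iC: "i \<in> ?C" using pN[OF i(1)] i(2) by simp
    have "unfill p (flip (Sst s t) w) ! k = (w!i \<noteq> (i \<in> Sst s t))" using i lw by simp
    moreover have "Y0 ! k = w!i" using i lw Y0_def by simp
    moreover have "\<alpha> k = (i \<in> ?Ca)" using i \<alpha>_def chi_def by simp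
    moreover have "(i \<in> Sst s t) = (if i \<in> ?Ca then s else t)" using iC dis Sst_def by auto
    ultimately show "unfill p (flip (Sst s t) w) ! k = ptv m Y0 \<alpha> s t ! k" using k by simp
  qed
  have SstC: "Sst s t \<subseteq> ?C" for s t unfolding Sst_def by auto
  have fb: "fill p (unfill p (flip (Sst s t) w)) = flip (Sst s t) w" for s t
  proof (rule U4)
    show "length (flip (Sst s t) w) = length p" using lw lp by simp
    show "\<forall>i<length p. \<forall>bb. p ! i = Some bb \<longrightarrow> flip (Sst s t) w ! i = bb"
    proof (intro allI impI)
      fix i bb assume i: "i < length p" "p ! i = Some bb"
      then have "i \<notin> ?C" "bb = w!i" using pS lp by auto
      moreover have "i \<notin> Sst s t" using SstC calculation(1) by blast
      ultimately show "flip (Sst s t) w ! i = bb" using i lp lw by simp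
    qed
  qed
  have hval: "h (ptv m Y0 \<alpha> s t) = f (flip (Sst s t) w)" for s t
    unfolding h_def pin_def key[symmetric] fb ..
  have inD: "flip (Sst s t) w \<in> D" for s t
    using wD d1 d2 d3 by (cases s; cases t) (simp_all add: Sst_def)
  have supp: "\<forall>ys. ys \<in> supp m h \<longleftrightarrow> (\<exists>s t. ys = ptv m Y0 \<alpha> s t)"
  proof (intro allI iffI)
    fix ys assume "\<exists>s t. ys = ptv m Y0 \<alpha> s t"
    then obtain s t where ys: "ys = ptv m Y0 \<alpha> s t" by blast
    have "h ys \<noteq> 0" using hval inD D_def ys by simp
    then show "ys \<in> supp m h" unfolding supp_def using ys by simp
  next
    fix ys assume "ys \<in> supp m h"
    then have ly: "length ys = m" and hy: "h ys \<noteq> 0" unfolding supp_def by auto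
    define x where "x = fill p ys"
    have lx: "length x = n" unfolding x_def using U2 lp by simp
    have xD: "x \<in> D" using hy lx unfolding D_def h_def pin_def x_def by simp
    let ?S = "{k. k < n \<and> x!k \<noteq> w!k}"
    have cl: "closed ?S" and xe: "x = flip ?S w" using diff_closed[OF xD wD] by auto
    have SC: "?S \<subseteq> ?C"
    proof
      fix k assume k: "k \<in> ?S"
      show "k \<in> ?C"
      proof (rule ccontr)
        assume "k \<notin> ?C"
        then have "p!k = Some (w!k)" using pS k by simp
        moreover have "k < n" using k by simp
        ultimately have "x!k = w!k" using U6[of p ys] lp x_def by auto
        then show False using k by simp
      qed
    qed
    have SS: "?S = Sst (a \<in> ?S) (b \<in> ?S)"
    proof (intro equalityI subsetI)
      fix k assume k: "k \<in> ?S"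
      then have "k \<in> ?Ca \<or> k \<in> ?Cb" using SC by auto
      then show "k \<in> Sst (a \<in> ?S) (b \<in> ?S)"
      proof
        assume kA: "k \<in> ?Ca"
        then have "comp k = ?Ca" using comp_eq by blast
        then have "?Ca \<subseteq> ?S" using closed_sub[OF cl k] by simp
        then show ?thesis using kA comp_self[of a] Sst_def by auto
      next
        assume kB: "k \<in> ?Cb"
        then have "comp k = ?Cb" using comp_eq by blast
        then have "?Cb \<subseteq> ?S" using closed_sub[OF cl k] by simp
        then show ?thesis using kB comp_self[of b] Sst_def by auto
      qed
    next
      fix k assume "k \<in> Sst (a \<in> ?S) (b \<in> ?S)"
      then show "k \<in> ?S" unfolding Sst_def using closed_sub[OF cl] by (auto split: if_splits)
    qed
    have "ys = unfill p x" unfolding x_def using U3 ly m_def by simp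
    also have "\<dots> = unfill p (flip (Sst (a \<in> ?S) (b \<in> ?S)) w)"
    proof -
      have "flip ?S w = flip (Sst (a \<in> ?S) (b \<in> ?S)) w" using SS by (rule arg_cong)
      then have "x = flip (Sst (a \<in> ?S) (b \<in> ?S)) w" by (rule trans[OF xe])
      then show ?thesis by (rule arg_cong)
    qed
    also have "\<dots> = ptv m Y0 \<alpha> (a \<in> ?S) (b \<in> ?S)" by (rule key)
    finally show "\<exists>s t. ys = ptv m Y0 \<alpha> s t" by blast
  qed
  have lchi: "length chi = n" unfolding chi_def by simp
  obtain kA where kA: "kA < m" "\<forall>x. length x = n \<longrightarrow> unfill p x ! kA = x ! a"
    using U7[of p] pN[OF an] comp_self[of a] an lp m_def by auto
  obtain kB where kB: "kB < m" "\<forall>x. length x = n \<longrightarrow> unfill p x ! kB = x ! b"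
    using U7[of p] pN[OF bn] comp_self[of b] bn lp m_def by auto
  have aA: "\<alpha> kA" using kA lchi an comp_self[of a] unfolding \<alpha>_def chi_def by simp
  have aB: "\<not> \<alpha> kB" using kB lchi bn bCa unfolding \<alpha>_def chi_def by simp
  have h00: "h (ptv m Y0 \<alpha> False False) = f w" using hval[of False False] by (simp add: Sst_def)
  have h11: "h (ptv m Y0 \<alpha> True True) = f (flip ?C w)" using hval[of True True] by (simp add: Sst_def)
  have h10: "h (ptv m Y0 \<alpha> True False) = f (flip ?Ca w)" using hval[of True False] by (simp add: Sst_def)
  have h01: "h (ptv m Y0 \<alpha> False True) = f (flip ?Cb w)" using hval[of False True] by (simp add: Sst_def)
  have neq': "h (ptv m Y0 \<alpha> False False) * h (ptv m Y0 \<alpha> True True) \<noteq> h (ptv m Y0 \<alpha> True False) * h (ptv m Y0 \<alpha> False True)"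
    using neq h00 h11 h10 h01 by simp
  have pf: "\<forall>F\<in>set fs. factor_val F w * factor_val F (flip ?C w) = factor_val F (flip ?Ca w) * factor_val F (flip ?Cb w)"
  proof
    fix F assume F: "F \<in> set fs"
    obtain i where i: "i < n" "\<forall>x y. (\<forall>k\<in>comp i. x!k = y!k) \<longrightarrow> factor_val F x = factor_val F y"
      using home[OF F] by blast
    have cl: "comp i \<subseteq> {..<n}" using comp_lt[OF i(1)] .
    show "factor_val F w * factor_val F (flip ?C w) = factor_val F (flip ?Ca w) * factor_val F (flip ?Cb w)"
    proof (cases "comp i \<inter> ?Ca = {}")
      case True
      have "\<forall>k\<in>comp i. w!k = flip ?Ca w ! k"
      proof
        fix k assume "k \<in> comp i" then have "k < n" "k \<notin> ?Ca" using cl True by auto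
        then show "w!k = flip ?Ca w ! k" using lw by simp
      qed
      moreover have "\<forall>k\<in>comp i. flip ?C w ! k = flip ?Cb w ! k"
      proof
        fix k assume "k \<in> comp i" then have "k < n" "k \<notin> ?Ca" using cl True by auto
        then show "flip ?C w ! k = flip ?Cb w ! k" using lw by simp
      qed
      ultimately have "factor_val F w = factor_val F (flip ?Ca w)" "factor_val F (flip ?C w) = factor_val F (flip ?Cb w)"
        using i(2) by blast+
      then show ?thesis by simp
    next
      case False
      then obtain k0 where k0: "k0 \<in> comp i" "k0 \<in> ?Ca" by blast
      have "comp i = ?Ca" using comp_eq[OF k0(1)] comp_eq[OF k0(2)] by simp
      then have di: "comp i \<inter> ?Cb = {}" using dis by simp
      have "\<forall>k\<in>comp i. w!k = flip ?Cb w ! k"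
      proof
        fix k assume "k \<in> comp i" then have "k < n" "k \<notin> ?Cb" using cl di by auto
        then show "w!k = flip ?Cb w ! k" using lw by simp
      qed
      moreover have "\<forall>k\<in>comp i. flip ?C w ! k = flip ?Ca w ! k"
      proof
        fix k assume "k \<in> comp i" then have "k < n" "k \<notin> ?Cb" using cl di by auto
        then show "flip ?C w ! k = flip ?Ca w ! k" using lw by simp
      qed
      ultimately have "factor_val F w = factor_val F (flip ?Cb w)" "factor_val F (flip ?C w) = factor_val F (flip ?Ca w)"
        using i(2) by blast+
      then show ?thesis by (simp add: mult.commute)
    qed
  qed
  have pp: "prod_list (map (\<lambda>F. factor_val F w) fs) * prod_list (map (\<lambda>F. factor_val F (flip ?C w)) fs)
     = prod_list (map (\<lambda>F. factor_val F (flip ?Ca w)) fs) * prod_list (map (\<lambda>F. factor_val F (flip ?Cb w)) fs)"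
    by (rule prod4[OF pf])
  have sqe: "\<And>x. length x = n \<Longrightarrow> (f x)^2 = c * prod_list (map (\<lambda>F. factor_val F x) fs)" using sqf by blast
  have "(f w * f (flip ?C w))^2 = (c * c) * (prod_list (map (\<lambda>F. factor_val F w) fs) * prod_list (map (\<lambda>F. factor_val F (flip ?C w)) fs))"
    unfolding power_mult_distrib using sqe[of w] sqe[of "flip ?C w"] lw by (simp add: mult_ac)
  also have "\<dots> = (f (flip ?Ca w) * f (flip ?Cb w))^2"
    unfolding pp power_mult_distrib using sqe[of "flip ?Ca w"] sqe[of "flip ?Cb w"] lw by (simp add: mult_ac)
  finally have sq': "(h (ptv m Y0 \<alpha> False False) * h (ptv m Y0 \<alpha> True True))^2 = (h (ptv m Y0 \<alpha> True False) * h (ptv m Y0 \<alpha> False True))^2"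
    using h00 h11 h10 h01 by simp
  have "has_rank m h 2 \<and> (\<exists>J. free_vars m h J) \<and>
       (\<forall>J. free_vars m h J \<longrightarrow>
          ess_arity m h J = 2 \<and>
          \<not> in_P 2 (compressed m h J) \<and> in_P 2 (fsq (compressed m h J)) \<and>
          (\<forall>v. length v = 2 \<longrightarrow> compressed m h J v \<noteq> 0))"
    by (rule abstract2[OF kA(1) kB(1) aA aB supp neq' sq'])
  then show ?thesis unfolding Let_def using lp m_def h_def by blast
qed

end

theorem lemma4p14:
  fixes n :: nat and f :: "bool list \<Rightarrow> complex"
  assumes "\<not> in_P n f" and "in_P n (fsq f)"
  shows "\<exists>p. length p = n \<and>
    (let h = pin f p; m = pin_arity p in
       has_rank m h 2 \<and> (\<exists>J. free_vars m h J) \<and>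
       (\<forall>J. free_vars m h J \<longrightarrow>
          ess_arity m h J = 2 \<and>
          \<not> in_P 2 (compressed m h J) \<and> in_P 2 (fsq (compressed m h J)) \<and>
          (\<forall>v. length v = 2 \<longrightarrow> compressed m h J v \<noteq> 0)))"
proof -
  obtain c fs where ok: "\<forall>F\<in>set fs. factor_ok n F" and
    eq: "\<forall>xs. length xs = n \<longrightarrow> (f xs)^2 = c * prod_list (map (\<lambda>F. factor_val F xs) fs)"
    using assms(2) unfolding in_P_def fsq_def by blast
  have cnz: "c \<noteq> 0"
  proof
    assume "c = 0"
    then have "\<forall>xs. length xs = n \<longrightarrow> f xs = 0 * prod_list (map (\<lambda>F. factor_val F xs) [])" using eq by simp
    then have "in_P n f" unfolding in_P_def by (intro exI[of _ 0] exI[of _ "[]"]) simp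
    then show False using assms(1) by simp
  qed
  interpret sqP n f c fs using ok eq cnz by unfold_locales
  obtain w a b where "OB w a b" using noob_P assms(1) by blast
  then show ?thesis by (rule OB_pin)
qed

end
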